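(* Let $n\in\mathbb{N}$ and let $K\subset\mathbb{R}^n$ be a strictly convex, $0$-symmetric convex body. Then \[ G(K)\le 2^n\bigl(G(\operatorname{int}K)+1\bigr)-1. \]
   Context: A convex body in $\mathbb{R}^n$ is a compact convex set with nonempty interior; it is $0$-symmetric if $K=-K$, and strictly convex if its boundary contains no nondegenerate line segment. For $S\subset\mathbb{R}^n$, $G(S)=|S\cap\mathbb{Z}^n|$, and $\operatorname{int}K$ denotes the interior of $K$. *)

theory Defs
  imports "HOL-Analysis.Analysis"
begin

definition lattice_points :: "(real ^ 'n) set" where
  "lattice_points = {x. \<forall>i. x $ i \<in> \<int>}"

definition G :: "(real ^ 'n) set \<Rightarrow> nat" where
  "G S = card (S \<inter> lattice_points)"

definition convex_body :: "(real ^ 'n) set \<Rightarrow> bool" where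
  "convex_body K \<longleftrightarrow> compact K \<and> convex K \<and> interior K \<noteq> {}"

definition origin_symmetric :: "(real ^ 'n) set \<Rightarrow> bool" where
  "origin_symmetric K \<longleftrightarrow> uminus ` K = K"

definition strictly_convex_body :: "(real ^ 'n) set \<Rightarrow> bool" where
  "strictly_convex_body K \<longleftrightarrow> convex_body K \<and>
     (\<forall>a b. a \<noteq> b \<longrightarrow> \<not> closed_segment a b \<subseteq> frontier K)"

end

theory Submission
  imports Defs
begin

lemma mid_interior_aux:
  fixes K :: "(real ^ 'n) set"
  assumes cv: "convex K" and cl: "closed K" and x: "x \<in> K" and y: "y \<in> K" and xy: "x \<noteq> y"
    and t: "0 \<le> t" "t < 1/2" and z: "(1 - t) *\<^sub>R x + t *\<^sub>R y \<in> interior K"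
  shows "midpoint x y \<in> interior K"
proof -
  define z where "z = (1 - t) *\<^sub>R x + t *\<^sub>R y"
  define s where "s = (1/2 - t) / (1 - t)"
  have s: "0 < s" "s < 1" using t by (auto simp: s_def field_simps)
  have eq: "midpoint x y = (1 - s) *\<^sub>R z + s *\<^sub>R y"
  proof -
    have s1: "1 - s = 1 / (2 * (1 - t))" using t by (simp add: s_def field_simps)
    have a1: "(1 - s) * (1 - t) = 1/2" using t by (simp add: s1)
    moreover have "(1 - s) * t + s = 1 - (1 - s) * (1 - t)" by (simp add: algebra_simps)
    hence "(1 - s) * t + s = 1/2" using a1 by simp
    ultimately have e2: "(1 - s) *\<^sub>R z + s *\<^sub>R y = (1/2) *\<^sub>R x + (1/2) *\<^sub>R y"
    proof -
      have "(1 - s) *\<^sub>R z + s *\<^sub>R y = ((1-s)*(1-t)) *\<^sub>R x + ((1-s)*t + s) *\<^sub>R y"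
        unfolding z_def by (simp add: scaleR_add_right scaleR_add_left add.assoc)
      then show ?thesis using a1 \<open>(1 - s) * t + s = 1/2\<close> by simp
    qed
    show ?thesis unfolding e2 midpoint_def by (simp add: scaleR_add_right)
  qed
  have zy: "z \<noteq> y"
  proof
    assume "z = y"
    hence "(1 - t) *\<^sub>R x = (1 - t) *\<^sub>R y" unfolding z_def by (simp add: algebra_simps)
    with t xy show False by simp
  qed
  have "midpoint x y \<in> open_segment z y" using zy s eq by (auto simp: in_segment)
  moreover have "open_segment z y \<subseteq> interior K"
    by (rule in_interior_closure_convex_segment) (use cv z y cl in \<open>auto simp: z_def\<close>)
  ultimately show ?thesis by blast
qed

lemma mid_interior:
  fixes K :: "(real ^ 'n) set"
  assumes sc: "strictly_convex_body K" and x: "x \<in> K" and y: "y \<in> K" and xy: "x \<noteq> y"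
  shows "midpoint x y \<in> interior K"
proof -
  have cb: "compact K" "convex K" using sc by (auto simp: strictly_convex_body_def convex_body_def)
  have cl: "closed K" using cb compact_imp_closed by blast
  obtain z where z: "z \<in> closed_segment x y" "z \<notin> frontier K"
    using sc xy by (auto simp: strictly_convex_body_def)
  have "z \<in> K" using z(1) x y cb(2) by (meson convex_contains_segment subsetD)
  hence zi: "z \<in> interior K" using z(2) cl by (simp add: frontier_def closure_closed)
  obtain t where t: "0 \<le> t" "t \<le> 1" "z = (1 - t) *\<^sub>R x + t *\<^sub>R y" using z(1) by (auto simp: in_segment)
  consider "t < 1/2" | "t = 1/2" | "t > 1/2" by linarith
  then show ?thesis
  proof cases
    case 1 then show ?thesis using mid_interior_aux[OF cb(2) cl x y xy t(1) 1] zi t by simp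
  next
    case 2
    have "z = midpoint x y" using t 2 by (simp add: midpoint_def scaleR_add_right)
    then show ?thesis using zi by simp
  next
    case 3
    have "(1 - (1-t)) *\<^sub>R y + (1-t) *\<^sub>R x = z" using t by (simp add: algebra_simps)
    have h1: "0 \<le> 1 - t" using t by simp
    have h2: "1 - t < 1/2" using 3 by simp
    have "midpoint y x \<in> interior K"
      by (rule mid_interior_aux[OF cb(2) cl y x _ h1 h2]) (use xy zi \<open>(1 - (1-t)) *\<^sub>R y + (1-t) *\<^sub>R x = z\<close> in simp_all)
    then show ?thesis by (simp add: midpoint_sym)
  qed
qed

lemma zero_interior:
  fixes K :: "(real ^ 'n) set"
  assumes "convex_body K" and "origin_symmetric K"
  shows "0 \<in> interior K"
proof -
  obtain p where p: "p \<in> interior K" using assms by (auto simp: convex_body_def)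
  have "interior K = uminus ` interior K"
    using assms(2) interior_negations[of K] by (simp add: origin_symmetric_def)
  hence mp: "-p \<in> interior K" using p by (metis image_eqI minus_minus)
  have "convex (interior K)" using assms by (simp add: convex_body_def convex_interior)
  hence "(1/2) *\<^sub>R p + (1/2) *\<^sub>R (-p) \<in> interior K"
    using p mp by (rule convexD) auto
  then show ?thesis by simp
qed

lemma finite_lattice:
  fixes S :: "(real ^ 'n) set"
  assumes "bounded S"
  shows "finite (S \<inter> lattice_points)"
proof -
  obtain r where r: "\<forall>x\<in>S. norm x \<le> r" using assms bounded_iff by blast
  define R where "R = \<lceil>r\<rceil>"
  have "S \<inter> lattice_points \<subseteq> (\<lambda>f. \<chi> i. of_int (f i)) ` (PiE UNIV (\<lambda>_. {-R..R}))"
  proof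
    fix x assume x: "x \<in> S \<inter> lattice_points"
    define f where "f i = (if True then \<lfloor>x $ i\<rfloor> else 0)" for i
    have xi: "of_int \<lfloor>x $ i\<rfloor> = x $ i" for i
      using x by (auto simp: lattice_points_def)
    have "\<bar>x $ i\<bar> \<le> r" for i using x r component_le_norm_cart[of x i] by auto
    have "\<lfloor>x $ i\<rfloor> \<in> {-R..R}" for i
    proof -
      have a: "of_int \<lfloor>x $ i\<rfloor> \<le> r" "of_int (- \<lfloor>x $ i\<rfloor>) \<le> r"
        unfolding of_int_minus xi[of i] using \<open>\<bar>x $ i\<bar> \<le> r\<close> by (simp_all add: abs_le_iff)
      have "\<lfloor>x $ i\<rfloor> \<le> R" "- \<lfloor>x $ i\<rfloor> \<le> R"
        unfolding R_def using a by (simp_all add: le_ceiling_iff)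
      then show ?thesis by simp
    qed
    hence "f \<in> PiE UNIV (\<lambda>_. {-R..R})" by (auto simp: f_def)
    moreover have "x = (\<chi> i. of_int (f i))" by (simp add: f_def xi vec_eq_iff)
    ultimately show "x \<in> (\<lambda>f. \<chi> i. of_int (f i)) ` (PiE UNIV (\<lambda>_. {-R..R}))" by blast
  qed
  moreover have "finite (PiE (UNIV::'n set) (\<lambda>_. {-R..R}))" by (simp add: finite_PiE)
  ultimately show ?thesis by (meson finite_imageI finite_subset)
qed

lemma lattice_mid:
  assumes x: "x \<in> lattice_points" and r: "r \<in> lattice_points"
    and p: "{i. odd \<lfloor>x $ i\<rfloor>} = {i. odd \<lfloor>r $ i\<rfloor>}"
  shows "midpoint x (-r) \<in> lattice_points"
  unfolding lattice_points_def
proof (intro CollectI allI)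
  fix i
  obtain a where a: "x $ i = of_int a" using x by (auto simp: lattice_points_def elim!: Ints_cases)
  obtain b where b: "r $ i = of_int b" using r by (auto simp: lattice_points_def elim!: Ints_cases)
  have "(i \<in> {i. odd \<lfloor>x $ i\<rfloor>}) = (i \<in> {i. odd \<lfloor>r $ i\<rfloor>})" using p by simp
  hence "odd a = odd b" using a b by simp
  hence "even (a - b)" by auto
  then obtain k where k: "a - b = 2 * k" by blast
  have "midpoint x (-r) $ i = (x $ i - r $ i) / 2" by (simp add: midpoint_def)
  also have "\<dots> = of_int k" using k a b by (simp add: field_simps flip: of_int_diff)
  finally show "midpoint x (-r) $ i \<in> \<int>" by simp
qed

theorem mainTheorem4:
  fixes K :: "(real ^ 'n) set"
  assumes "strictly_convex_body K" and "origin_symmetric K"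
  shows "real (G K) \<le> 2 ^ CARD('n) * (real (G (interior K)) + 1) - 1"
proof -
  define L where "L = (lattice_points :: (real ^ 'n) set)"
  define par where "par x = {i. odd \<lfloor>(x::real^'n) $ i\<rfloor>}" for x
  define A where "A S = {x \<in> K \<inter> L. par x = S}" for S
  define g where "g = G (interior K)"
  have sc: "strictly_convex_body K" by fact
  have cb: "convex_body K" using sc by (simp add: strictly_convex_body_def)
  have bK: "bounded K" using cb by (simp add: convex_body_def compact_imp_bounded)
  have finK: "finite (K \<inter> L)" unfolding L_def by (rule finite_lattice[OF bK])
  have finI: "finite (interior K \<inter> L)" unfolding L_def
    by (rule finite_lattice) (meson bK bounded_subset interior_subset)
  have g: "g = card (interior K \<inter> L)" by (simp add: g_def G_def L_def)
  have negK: "-r \<in> K" if "r \<in> K" for r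
    using assms(2) that unfolding origin_symmetric_def by (metis image_eqI)
  have cls: "card (A S) \<le> card (insert (-r) (interior K \<inter> L))" if r: "r \<in> A S" for S r
  proof (rule card_inj_on_le[of "\<lambda>x. midpoint x (-r)"])
    show "inj_on (\<lambda>x. midpoint x (-r)) (A S)"
      by (auto simp: inj_on_def midpoint_def)
    show "finite (insert (-r) (interior K \<inter> L))" using finI by simp
    show "(\<lambda>x. midpoint x (-r)) ` A S \<subseteq> insert (-r) (interior K \<inter> L)"
    proof
      fix y assume "y \<in> (\<lambda>x. midpoint x (-r)) ` A S"
      then obtain x where x: "x \<in> A S" and y: "y = midpoint x (-r)" by blast
      have xK: "x \<in> K" "x \<in> L" "r \<in> K" "r \<in> L" "par x = par r" using x r by (auto simp: A_def)
      have yL: "y \<in> L" unfolding y L_def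
        by (rule lattice_mid) (use xK in \<open>auto simp: L_def par_def\<close>)
      show "y \<in> insert (-r) (interior K \<inter> L)"
      proof (cases "x = -r")
        case True then show ?thesis using y by simp
      next
        case False
        then have "y \<in> interior K" unfolding y by (intro mid_interior[OF sc xK(1) negK[OF xK(3)]])
        then show ?thesis using yL by simp
      qed
    qed
  qed
  have bnd: "card (A S) \<le> g + 1" for S
  proof (cases "A S = {}")
    case True then show ?thesis by simp
  next
    case False
    then obtain r where "r \<in> A S" by blast
    then have "card (A S) \<le> card (insert (-r) (interior K \<inter> L))" by (rule cls)
    also have "\<dots> \<le> card (interior K \<inter> L) + 1" by (simp add: card_insert_if finI)
    finally show ?thesis by (simp add: g)
  qed
  have z: "0 \<in> interior K" by (rule zero_interior[OF cb assms(2)])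
  have zL: "(0::real^'n) \<in> L" by (simp add: L_def lattice_points_def)
  have "0 \<in> A {}" using z zL interior_subset by (auto simp: A_def par_def)
  then have "card (A {}) \<le> card (insert (-0) (interior K \<inter> L))" by (rule cls)
  also have "insert (-0) (interior K \<inter> L) = interior K \<inter> L" using z zL by auto
  finally have bnd0: "card (A {}) \<le> g" by (simp add: g)
  have KU: "K \<inter> L = (\<Union>S\<in>Pow UNIV. A S)" by (auto simp: A_def)
  have "card (K \<inter> L) = (\<Sum>S\<in>Pow UNIV. card (A S))"
    unfolding KU by (rule card_UN_disjoint) (auto simp: A_def intro: finite_subset[OF _ finK])
  also have "\<dots> = card (A {}) + (\<Sum>S\<in>Pow UNIV - {{}}. card (A S))"
    by (rule sum.remove) auto
  also have "\<dots> \<le> g + (\<Sum>S\<in>Pow (UNIV::'n set) - {{}}. g + 1)"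
    by (rule add_mono[OF bnd0 sum_mono[OF bnd]])
  also have "(\<Sum>S\<in>Pow (UNIV::'n set) - {{}}. g + 1) = card (Pow (UNIV::'n set) - {{}}) * (g + 1)"
    by simp
  also have "card (Pow (UNIV::'n set) - {{}}) = 2 ^ CARD('n) - 1"
    by (simp add: card_Pow card_Diff_singleton)
  finally have le: "G K \<le> g + (2 ^ CARD('n) - 1) * (g + 1)" by (simp add: G_def L_def)
  define N :: nat where "N = 2 ^ CARD('n)"
  have p1: "1 \<le> N" by (simp add: N_def)
  have "real (G K) \<le> real (g + (N - 1) * (g + 1))" using le unfolding N_def of_nat_le_iff .
  also have "real (g + (N - 1) * (g + 1)) = real N * (real g + 1) - 1"
  proof -
    obtain M where M: "N = Suc M" using p1 by (cases N) auto
    show ?thesis unfolding M by (simp add: algebra_simps)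
  qed
  also have "real N = 2 ^ CARD('n)" by (simp add: N_def)
  finally show ?thesis unfolding g_def .
qed

end
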